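(* Let $k>l\ge0$ be integers with $k+l\ge3$, $n_0$ an integer with $l\le n_0<k$, $\Delta=k-l$, $f:\mathbb{N}\to[0,\infty)$, and set $\gamma_r=\beta^{lk}_{n_0+r\Delta}$, $\delta_r=f(n_0+r\Delta)$. Let $(d_r)_{r\in\mathbb{N}}$ be a solution, with arbitrary initial values $d_0,d_1\in\mathbb{C}$, of $$d_{r+2}-\frac{1+i\delta_{r+1}}{\gamma_{r+2}}d_{r+1}-\frac{\gamma_{r+1}}{\gamma_{r+2}}d_r=0\qquad(r\in\mathbb{N}).$$ Assume that $\delta_{r+1}/\gamma_{r+2}$ admits an asymptotic expansion in powers of $r^{-1/2}$, $$\frac{\delta_{r+1}}{\gamma_{r+2}}\sim\kappa+\frac{L_1}{r^{1/2}}+\frac{L_2}{r}+\cdots$$ with $\kappa<2$. Then $(d_r)_{r\in\mathbb{N}}\in\ell^2(\mathbb{N};\mathbb{C})$.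
   Context: For integers $x$ and $s\ge0$, $(x,s)=x(x+1)\cdots(x+s-1)$ ($=1$ if $s=0$), with the convention $(x,s)=0$ whenever $x$ is a negative integer; for integers $n$ and $k,l\ge0$, $\beta^{kl}_n=\sqrt{(n-l+1,l)(n-l+1,k)}$ (so $\gamma_r\neq0$ for $r\ge1$). A function $g:\mathbb{N}\to\mathbb{C}$ admits an asymptotic expansion $g(r)\sim\sum_{s\ge0}\lambda_sr^{-s/2}$ if for every $S\in\mathbb{N}$ there are $C,N$ with $|g(r)-\sum_{s=0}^S\lambda_sr^{-s/2}|\le Cr^{-(S+1)/2}$ for all $r\ge N$. *)

theory Defs
  imports "HOL-Analysis.Analysis"
begin

definition rising :: "int \<Rightarrow> nat \<Rightarrow> real" where
  "rising x s = (if x < 0 then 0 else pochhammer (real_of_int x) s)"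

definition beta :: "nat \<Rightarrow> nat \<Rightarrow> int \<Rightarrow> real" where
  "beta k l n = sqrt (rising (n - int l + 1) l * rising (n - int l + 1) k)"

definition has_asymp_expansion :: "(nat \<Rightarrow> complex) \<Rightarrow> (nat \<Rightarrow> complex) \<Rightarrow> bool" where
  "has_asymp_expansion g lam \<longleftrightarrow>
     (\<forall>S::nat. \<exists>C::real. \<exists>N::nat. \<forall>r\<ge>N.
        cmod (g r - (\<Sum>s\<le>S. lam s * complex_of_real (real r powr (- real s / 2))))
          \<le> C * real r powr (- (real S + 1) / 2))"

end

theory Submission
  imports Defs
begin


lemma energy_identity:
  fixes PA PB PC da db :: real and u v w :: complex
  assumes "PB > 0" "PC > 0"
    and "of_real PB * w = of_real PA * u + (1 + \<i> * of_real db) * v"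
  shows "((PB^2/PC) * (cmod v)^2 + PB * (cmod w)^2 - db * Im (w * cnj v))
       - ((PA^2/PB) * (cmod u)^2 + PA * (cmod v)^2 - da * Im (v * cnj u))
     = (PB^2/PC - PA + 1/PB) * (cmod v)^2 + (2*PA/PB) * Re (v * cnj u)
       + (da - db*PA/PB) * Im (v * cnj u)"
proof -
  have e1: "PB * Re w = PA * Re u + Re v - db * Im v"
    using arg_cong[OF assms(3), of Re] by simp
  have e2: "PB * Im w = PA * Im u + Im v + db * Re v"
    using arg_cong[OF assms(3), of Im] by simp
  have w1: "Re w = (PA * Re u + Re v - db * Im v)/PB" using e1 assms(1) by (simp add: field_simps)
  have w2: "Im w = (PA * Im u + Im v + db * Re v)/PB" using e2 assms(1) by (simp add: field_simps)
  show ?thesis using assms(1,2)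
    by (simp add: cmod_power2 w1 w2 field_simps) (simp add: algebra_simps power2_eq_square)
qed

lemma re_bound: "\<bar>Re (v * cnj u)\<bar> \<le> ((cmod u)^2 + (cmod v)^2)/2"
proof -
  have "\<bar>Re (v * cnj u)\<bar> \<le> cmod v * cmod u"
    by (metis abs_Re_le_cmod complex_mod_cnj norm_mult)
  also have "\<dots> \<le> ((cmod u)^2 + (cmod v)^2)/2"
  proof -
    have "0 \<le> (cmod u - cmod v)^2" by simp
    then have "2*(cmod v * cmod u) \<le> (cmod u)^2 + (cmod v)^2" by (simp add: power2_diff algebra_simps)
    then show ?thesis by simp
  qed
  finally show ?thesis .
qed

lemma im_bound: "\<bar>Im (v * cnj u)\<bar> \<le> ((cmod u)^2 + (cmod v)^2)/2"
proof -
  have "\<bar>Im (v * cnj u)\<bar> \<le> cmod v * cmod u"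
    by (metis abs_Im_le_cmod complex_mod_cnj norm_mult)
  also have "\<dots> \<le> ((cmod u)^2 + (cmod v)^2)/2"
  proof -
    have "0 \<le> (cmod u - cmod v)^2" by simp
    then have "2*(cmod v * cmod u) \<le> (cmod u)^2 + (cmod v)^2" by (simp add: power2_diff algebra_simps)
    then show ?thesis by simp
  qed
  finally show ?thesis .
qed

lemma pow_bound:
  fixes t :: real assumes "0 \<le> t" "t \<le> 1"
  shows "(1+t)^N \<le> 1 + t * N * 2^N"
proof (induction N)
  case 0 then show ?case by simp
next
  case (Suc N)
  have "(1+t)^Suc N = (1+t)^N * (1+t)" by simp
  also have "\<dots> \<le> (1 + t*N*2^N) * (1+t)" using Suc assms by (intro mult_right_mono) auto
  also have "\<dots> = 1 + t + t*N*2^N + t*(t*N*2^N)" by (simp add: algebra_simps)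
  also have "\<dots> \<le> 1 + t + t*N*2^N + 1*(t*N*2^N)"
    using assms by (intro add_left_mono mult_right_mono) auto
  also have "\<dots> \<le> 1 + t * Suc N * 2^Suc N"
  proof -
    have o: "(1::real) \<le> 2 * 2^N" using one_le_power[of "2::real" N] by linarith
    have h: "t \<le> t * (2 * 2^N)" using mult_left_mono[OF o, of t] assms by simp
    then show ?thesis by (simp add: algebra_simps)
  qed
  finally show ?case .
qed

lemma prod_bound:
  fixes a b :: "nat \<Rightarrow> real"
  assumes "finite A" "\<And>j. j \<in> A \<Longrightarrow> 0 \<le> a j \<and> a j \<le> c * b j"
  shows "prod a A \<le> c ^ card A * prod b A"
proof -
  have "prod a A \<le> prod (\<lambda>j. c * b j) A" using assms by (intro prod_mono) auto
  also have "\<dots> = c ^ card A * prod b A" by (simp add: prod.distrib)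
  finally show ?thesis .
qed

lemma bounded_growth:
  fixes Q e :: "nat \<Rightarrow> real"
  assumes "\<And>s. s \<ge> R \<Longrightarrow> Q (Suc s) \<le> (1 + e s) * Q s"
    and "\<And>s. s \<ge> R \<Longrightarrow> Q s \<ge> 0" and "\<And>s. e s \<ge> 0" and "summable e"
  shows "\<exists>M. \<forall>s\<ge>R. Q s \<le> M"
proof -
  have "Q (R + n) \<le> Q R * exp (\<Sum>i<n. e (R+i))" for n
  proof (induction n)
    case 0 then show ?case by simp
  next
    case (Suc n)
    have "Q (R + Suc n) \<le> (1 + e (R+n)) * Q (R+n)" using assms(1)[of "R+n"] by simp
    also have "\<dots> \<le> exp (e (R+n)) * (Q R * exp (\<Sum>i<n. e (R+i)))"
      using Suc assms(2)[of "R+n"] assms(3)[of "R+n"]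
      by (intro mult_mono) (auto simp: exp_ge_add_one_self add.commute)
    also have "\<dots> = Q R * exp (\<Sum>i<Suc n. e (R+i))" by (simp add: exp_add)
    finally show ?case .
  qed
  moreover have s: "(\<Sum>i<n. e (R+i)) \<le> suminf e" for n
  proof -
    have "(\<Sum>i<n. e (R+i)) = (\<Sum>i\<in>(\<lambda>i. R+i) ` {..<n}. e i)"
      by (simp add: sum.reindex)
    also have "\<dots> \<le> suminf e" using assms(3,4) by (intro sum_le_suminf) auto
    finally show ?thesis .
  qed
  ultimately have "Q (R + n) \<le> Q R * exp (suminf e)" for n
  proof -
    assume h: "\<And>n. Q (R + n) \<le> Q R * exp (\<Sum>i<n. e (R+i))"
    have "Q R * exp (\<Sum>i<n. e (R+i)) \<le> Q R * exp (suminf e)"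
      using assms(2)[of R] s[of n] by (intro mult_left_mono) auto
    then show ?thesis using h[of n] by linarith
  qed
  then show ?thesis
    by (metis le_add_diff_inverse)
qed




definition mm :: "nat \<Rightarrow> nat \<Rightarrow> nat \<Rightarrow> real" where
  "mm a D r = real a + real r * real D"
lemma mm_pos: "a \<ge> 1 \<Longrightarrow> mm a D r > 0" unfolding mm_def
  by (simp add: add_pos_nonneg)

definition PP :: "nat \<Rightarrow> nat \<Rightarrow> nat \<Rightarrow> nat \<Rightarrow> nat \<Rightarrow> real" where
  "PP a D k l r = pochhammer (mm a D r) k * pochhammer (mm a D r) l"

lemma poch_ge: assumes "x \<ge> 0" shows "pochhammer (x::real) n \<ge> x ^ n"
proof -
  have "x ^ n = (\<Prod>i\<in>{0..<n}. x)" by simp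
  also have "\<dots> \<le> (\<Prod>i\<in>{0..<n}. x + of_nat i)" using assms by (intro prod_mono) auto
  finally show ?thesis by (simp add: pochhammer_prod)
qed

lemma PP_ge:
  assumes "a \<ge> 1" "D \<ge> 1"
  shows "PP a D k l r \<ge> (real r + 1) ^ (k + l)"
proof -
  have m: "mm a D r \<ge> real r + 1" using assms unfolding mm_def
    by (metis add.commute add_mono mult.right_neutral mult_left_mono of_nat_0_le_iff of_nat_1 of_nat_le_iff)
  have "(real r + 1) ^ (k+l) = (real r + 1)^k * (real r + 1)^l" by (simp add: power_add)
  also have "\<dots> \<le> (mm a D r)^k * (mm a D r)^l" using m
    by (intro mult_mono power_mono) auto
  also have "\<dots> \<le> PP a D k l r" unfolding PP_def using m mm_pos[OF assms(1), of D r]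
    by (intro mult_mono poch_ge pochhammer_nonneg) auto
  finally show ?thesis .
qed

lemma poch_ratio1:
  assumes "a \<ge> 1" "r \<ge> 1"
  shows "pochhammer (mm a D (Suc r)) n \<le> (1 + 1/real r) ^ n * pochhammer (mm a D r) n"
proof -
  have "pochhammer (mm a D (Suc r)) n = (\<Prod>i\<in>{0..<n}. mm a D (Suc r) + of_nat i)"
    by (simp add: pochhammer_prod)
  also have "\<dots> \<le> (1 + 1/real r) ^ card {0..<n} * (\<Prod>i\<in>{0..<n}. mm a D r + of_nat i)"
  proof (rule prod_bound)
    fix i assume "i \<in> {0..<n}"
    have x: "mm a D r + i \<ge> real r * D" unfolding mm_def by simp
    have r: "real r > 0" using assms by simp
    have "mm a D (Suc r) + i = (mm a D r + i) + D" unfolding mm_def by (simp add: algebra_simps)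
    also have "\<dots> \<le> (1 + 1/real r) * (mm a D r + i)"
    proof -
      have "real D \<le> (mm a D r + i) / r" using x r by (simp add: field_simps mult.commute)
      moreover have "(1 + 1/real r) * (mm a D r + i) = (mm a D r + i) + (mm a D r + i) / r"
        using r by (simp add: field_simps)
      ultimately show ?thesis by linarith
    qed
    finally show "0 \<le> mm a D (Suc r) + i \<and> mm a D (Suc r) + i \<le> (1 + 1/real r) * (mm a D r + i)"
      unfolding mm_def by simp
  qed simp
  finally show ?thesis by (simp add: pochhammer_prod)
qed

lemma poch_ratio2:
  assumes "a \<ge> 1" "r \<ge> 1"
  shows "(pochhammer (mm a D (Suc r)) n)^2 \<le> (1 + 1/(real r)^2) ^ n *
     (pochhammer (mm a D r) n * pochhammer (mm a D (Suc (Suc r))) n)"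
proof -
  have "(pochhammer (mm a D (Suc r)) n)^2 = (\<Prod>i\<in>{0..<n}. (mm a D (Suc r) + of_nat i)^2)"
    by (simp add: pochhammer_prod prod_power_distrib)
  also have "\<dots> \<le> (1 + 1/(real r)^2) ^ card {0..<n} *
      (\<Prod>i\<in>{0..<n}. (mm a D r + of_nat i) * (mm a D (Suc (Suc r)) + of_nat i))"
  proof (rule prod_bound)
    fix i assume "i \<in> {0..<n}"
    define x where "x = mm a D r + i"
    have x: "x \<ge> real r * D" unfolding mm_def x_def by simp
    have r: "real r > 0" using assms by simp
    have e1: "mm a D (Suc r) + i = x + D" unfolding mm_def x_def by (simp add: algebra_simps)
    have e2: "mm a D (Suc (Suc r)) + i = x + 2*D" unfolding mm_def x_def by (simp add: algebra_simps)
    have x0: "x \<ge> 0" using x r by (meson order.trans mult_nonneg_nonneg of_nat_0_le_iff)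
    have "(real r * D)^2 \<le> x^2" using x by (intro power_mono) auto
    then have "(real D)^2 \<le> x^2 / r^2" using r by (simp add: field_simps power_mult_distrib)
    also have "x^2 / r^2 \<le> x * (x + 2*D) / r^2" using x0
      by (intro divide_right_mono) (auto simp: power2_eq_square intro!: mult_left_mono)
    finally have hD: "(real D)^2 \<le> x * (x + 2*D) / r^2" .
    have q1: "(1 + 1/(real r)^2) * (x * (x + 2*D)) = x * (x + 2*D) + x * (x + 2*D) / r^2"
      by (simp add: distrib_right)
    have q2: "(x + D)^2 = x * (x + 2*D) + (real D)^2" by (simp add: power2_eq_square algebra_simps)
    have "(x + D)^2 \<le> (1 + 1/(real r)^2) * (x * (x + 2*D))"
      unfolding q1 q2 using hD by linarith
    moreover have e0: "mm a D r + i = x" by (simp add: x_def)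
    ultimately show "0 \<le> (mm a D (Suc r) + of_nat i)^2 \<and> (mm a D (Suc r) + of_nat i)^2
        \<le> (1 + 1/(real r)^2) * ((mm a D r + of_nat i) * (mm a D (Suc (Suc r)) + of_nat i))"
      by (simp only: e0 e1 e2) simp
  qed simp
  also have "\<dots> = (1 + 1/(real r)^2) ^ n *
     (pochhammer (mm a D r) n * pochhammer (mm a D (Suc (Suc r))) n)"
    by (simp add: pochhammer_prod prod.distrib)
  finally show ?thesis .
qed

lemma PP_ratio1:
  assumes "a \<ge> 1" "r \<ge> 1"
  shows "PP a D k l (Suc r) \<le> (1 + 1/real r) ^ (k+l) * PP a D k l r"
proof -
  have "PP a D k l (Suc r) \<le> ((1 + 1/real r) ^ k * pochhammer (mm a D r) k) * ((1 + 1/real r) ^ l * pochhammer (mm a D r) l)"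
    unfolding PP_def using assms
    using mm_pos[OF assms(1), of D] by (intro mult_mono poch_ratio1) (auto intro!: pochhammer_nonneg mult_nonneg_nonneg)
  then show ?thesis by (simp add: PP_def power_add algebra_simps)
qed

lemma PP_ratio2:
  assumes "a \<ge> 1" "r \<ge> 1"
  shows "(PP a D k l (Suc r))^2 \<le> (1 + 1/(real r)^2) ^ (k+l) * (PP a D k l r * PP a D k l (Suc (Suc r)))"
proof -
  have "(PP a D k l (Suc r))^2 = (pochhammer (mm a D (Suc r)) k)^2 * (pochhammer (mm a D (Suc r)) l)^2"
    by (simp add: PP_def power_mult_distrib)
  also have "\<dots> \<le> ((1 + 1/(real r)^2) ^ k * (pochhammer (mm a D r) k * pochhammer (mm a D (Suc (Suc r))) k))
     * ((1 + 1/(real r)^2) ^ l * (pochhammer (mm a D r) l * pochhammer (mm a D (Suc (Suc r))) l))"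
    using assms mm_pos[OF assms(1), of D] by (intro mult_mono poch_ratio2) (auto intro!: pochhammer_nonneg mult_nonneg_nonneg)
  also have "\<dots> = (1 + 1/(real r)^2) ^ (k+l) * (PP a D k l r * PP a D k l (Suc (Suc r)))"
    by (simp add: PP_def power_add algebra_simps)
  finally show ?thesis .
qed



lemma sqrt_le_self': "(x::real) \<ge> 1 \<Longrightarrow> sqrt x \<le> x"
proof -
  assume x: "x \<ge> 1"
  have "sqrt x * 1 \<le> sqrt x * sqrt x" using x by (intro mult_left_mono) auto
  then show ?thesis using x by simp
qed

lemma asymp_lim:
  fixes g :: "nat \<Rightarrow> real"
  assumes "has_asymp_expansion (\<lambda>r. complex_of_real (g r)) lam" "lam 0 = complex_of_real \<kappa>"
  shows "g \<longlonglongrightarrow> \<kappa>"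
proof -
  from assms(1)[unfolded has_asymp_expansion_def, rule_format, of 0] obtain C N where
    CN: "\<forall>r\<ge>N. cmod (complex_of_real (g r) - (\<Sum>s\<le>0. lam s * complex_of_real (real r powr (- real s / 2))))
       \<le> C * real r powr (- (real 0 + 1) / 2)" by blast
  have ev: "eventually (\<lambda>r. norm (g r - \<kappa>) \<le> C * real r powr (-1/2)) sequentially"
    unfolding eventually_sequentially
  proof (intro exI allI impI)
    fix r assume "r \<ge> max N 1"
    then have r: "r \<ge> N" "r \<ge> 1" "r \<noteq> 0" by auto
    have c1: "cmod (complex_of_real (g r) - (\<Sum>s\<le>0. lam s * complex_of_real (real r powr (- real s / 2))))
       \<le> C * real r powr (- (real 0 + 1) / 2)" using CN r(1) by blast
    have "cmod (complex_of_real (g r - \<kappa>)) \<le> C * real r powr (-1/2)"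
      using c1 r(3) assms(2) by simp
    then show "norm (g r - \<kappa>) \<le> C * real r powr (-1/2)" by (simp only: norm_of_real) simp
  qed
  have "(\<lambda>r. C * real r powr (-1/2)) \<longlonglongrightarrow> 0"
    by (intro tendsto_mult_right_zero tendsto_neg_powr filterlim_real_sequentially) auto
  then have "(\<lambda>r. g r - \<kappa>) \<longlonglongrightarrow> 0" using Lim_null_comparison[OF ev] by blast
  then show ?thesis using LIM_zero_iff by blast
qed

lemma powr_conv: "convergent (\<lambda>r. real r powr (- real s / 2))"
proof (cases "s = 0")
  case True
  have "(\<lambda>r. real r powr (- real s / 2)) \<longlonglongrightarrow> 1"
    by (rule tendsto_eventually) (use True in \<open>auto simp: eventually_sequentially intro!: exI[of _ 1]\<close>)
  then show ?thesis by (auto simp: convergent_def)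
next
  case False
  have "(\<lambda>r. real r powr (- real s / 2)) \<longlonglongrightarrow> 0"
    using False by (intro tendsto_neg_powr filterlim_real_sequentially) auto
  then show ?thesis by (auto simp: convergent_def)
qed

lemma summable_powr_shift: "summable (\<lambda>r. real (Suc r) powr (-3/2))"
proof -
  have "summable (\<lambda>r. real r powr (-3/2))" by (simp add: summable_real_powr_iff)
  then show ?thesis by (subst summable_Suc_iff)
qed

lemma asymp_bv:
  fixes g :: "nat \<Rightarrow> real"
  assumes "has_asymp_expansion (\<lambda>r. complex_of_real (g r)) lam"
  shows "summable (\<lambda>r. \<bar>g (Suc r) - g r\<bar>)"
proof -
  define h where "h r = (\<Sum>s\<le>2. lam s * complex_of_real (real r powr (- real s / 2)))" for r
  define u where "u s r = real r powr (- real s / 2)" for s r :: nat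
  from assms[unfolded has_asymp_expansion_def, rule_format, of 2] obtain C N where
    CN: "\<forall>r\<ge>N. cmod (complex_of_real (g r) - h r) \<le> C * real r powr (- (real 2 + 1) / 2)"
    unfolding h_def by blast
  have bnd: "norm \<bar>g (Suc r) - g r\<bar> \<le> C * real (Suc r) powr (-3/2) + C * real r powr (-3/2)
      + (\<Sum>s\<le>2. cmod (lam s) * (u s r - u s (Suc r)))" if r: "r \<ge> max N 1" for r
  proof -
    have eq: "complex_of_real (g (Suc r)) - complex_of_real (g r) =
      (complex_of_real (g (Suc r)) - h (Suc r)) - (complex_of_real (g r) - h r) + (h (Suc r) - h r)"
      by simp
    have "norm \<bar>g (Suc r) - g r\<bar> = cmod (complex_of_real (g (Suc r)) - complex_of_real (g r))"
      by (metis norm_of_real of_real_diff real_norm_def abs_abs)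
    also have "\<dots> \<le> cmod (complex_of_real (g (Suc r)) - h (Suc r)) + cmod (complex_of_real (g r) - h r)
        + cmod (h (Suc r) - h r)"
      unfolding eq using norm_triangle_ineq[of "complex_of_real (g (Suc r)) - h (Suc r) - (complex_of_real (g r) - h r)" "h (Suc r) - h r"]
        norm_triangle_ineq4[of "complex_of_real (g (Suc r)) - h (Suc r)" "complex_of_real (g r) - h r"]
      by linarith
    also have "\<dots> \<le> C * real (Suc r) powr (-3/2) + C * real r powr (-3/2)
        + (\<Sum>s\<le>2. cmod (lam s) * (u s r - u s (Suc r)))"
    proof (intro add_mono)
      show "cmod (complex_of_real (g (Suc r)) - h (Suc r)) \<le> C * real (Suc r) powr (-3/2)"
        using CN r by (auto dest!: spec[of _ "Suc r"])
      show "cmod (complex_of_real (g r) - h r) \<le> C * real r powr (-3/2)"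
        using CN r by auto
      have "h (Suc r) - h r = (\<Sum>s\<le>2. lam s * complex_of_real (u s (Suc r) - u s r))"
        unfolding h_def u_def by (simp add: sum_subtractf[symmetric] algebra_simps)
      also have "cmod \<dots> \<le> (\<Sum>s\<le>2. cmod (lam s * complex_of_real (u s (Suc r) - u s r)))"
        by (rule norm_sum)
      also have "\<dots> = (\<Sum>s\<le>2. cmod (lam s) * (u s r - u s (Suc r)))"
      proof (rule sum.cong)
        fix s assume "s \<in> {..2::nat}"
        have "u s (Suc r) \<le> u s r" unfolding u_def using r by (intro powr_mono2') auto
        then show "cmod (lam s * complex_of_real (u s (Suc r) - u s r)) = cmod (lam s) * (u s r - u s (Suc r))"
          by (simp add: norm_mult of_real_diff[symmetric] del: of_real_diff)
      qed simp
      finally show "cmod (h (Suc r) - h r) \<le> (\<Sum>s\<le>2. cmod (lam s) * (u s r - u s (Suc r)))" .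
    qed
    finally show ?thesis .
  qed
  have s1: "summable (\<lambda>r. C * real (Suc r) powr (-3/2))"
    using summable_powr_shift by (rule summable_mult)
  have s2: "summable (\<lambda>r. C * real r powr (-3/2))"
    by (intro summable_mult) (simp add: summable_real_powr_iff)
  have s3: "summable (\<lambda>r. (\<Sum>s\<le>2. cmod (lam s) * (u s r - u s (Suc r))))"
  proof (intro summable_sum summable_mult)
    fix s
    obtain c where "u s \<longlonglongrightarrow> c" using powr_conv[of s] unfolding u_def convergent_def by blast
    then show "summable (\<lambda>r. u s r - u s (Suc r))" by (rule telescope_summable')
  qed
  show ?thesis
    by (rule summable_comparison_test'[OF summable_add[OF summable_add[OF s1 s2] s3], of "max N 1"])
       (use bnd in auto)
qed



theorem lemma4p14:
  fixes k l n0 :: nat and f :: "nat \<Rightarrow> real" and d :: "nat \<Rightarrow> complex"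
    and \<kappa> :: real and lam :: "nat \<Rightarrow> complex"
  assumes "l < k" and "k + l \<ge> 3" and "l \<le> n0" and "n0 < k"
    and f_nonneg: "\<And>n. f n \<ge> 0"
    and rec: "\<And>r. d (r + 2)
        - (1 + \<i> * complex_of_real (f (n0 + (r + 1) * (k - l))))
            / complex_of_real (beta l k (int (n0 + (r + 2) * (k - l)))) * d (r + 1)
        - complex_of_real (beta l k (int (n0 + (r + 1) * (k - l))))
            / complex_of_real (beta l k (int (n0 + (r + 2) * (k - l)))) * d r = 0"
    and asymp: "has_asymp_expansion
        (\<lambda>r. complex_of_real (f (n0 + (r + 1) * (k - l))
              / beta l k (int (n0 + (r + 2) * (k - l))))) lam"
    and lam0: "lam 0 = complex_of_real \<kappa>"
    and "\<kappa> < 2"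
  shows "summable (\<lambda>r. (cmod (d r))\<^sup>2)"
proof -
  define D where "D = k - l"
  define a0 where "a0 = n0 - l + 1"
  define NN where "NN = k + l"
  define K where "K = real NN * 2 ^ NN"
  define p where "p r = sqrt (PP a0 D k l r)" for r
  have a0: "a0 \<ge> 1" "D \<ge> 1" using assms(1) by (auto simp: a0_def D_def)
  have PPge: "PP a0 D k l r \<ge> 1" for r
  proof -
    have "(1::real) \<le> (real r + 1) ^ (k+l)" by (intro one_le_power) simp
    then show ?thesis using PP_ge[OF a0, where k=k and l=l and r=r] by linarith
  qed
  have p1: "p r \<ge> 1" for r unfolding p_def using PPge by simp
  have ppos: "p r > 0" for r using p1[of r] by linarith
  have psq: "(p r)^2 = PP a0 D k l r" for r unfolding p_def using PPge[of r] by simp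
  have pinv: "1 / p r \<le> real (Suc r) powr (-3/2)" for r
  proof -
    have x0: "(0::real) < real r + 1" by simp
    have "(real r + 1)^3 \<le> (real r + 1)^(k+l)" using assms(2) by (intro power_increasing) auto
    then have "(real r + 1)^3 \<le> PP a0 D k l r" using PP_ge[OF a0, where k=k and l=l and r=r] by linarith
    then have "sqrt ((real r + 1)^3) \<le> p r" unfolding p_def by (rule real_sqrt_le_mono)
    moreover have "real (Suc r) powr (3/2) = sqrt ((real r + 1)^3)"
    proof -
      have "((real r + 1)^3) powr (1/2) = ((real r + 1) powr 3) powr (1/2)"
        using powr_realpow[OF x0, of 3] by simp
      also have "\<dots> = (real r + 1) powr (3/2)" by (subst powr_powr) simp
      finally have "((real r + 1)^3) powr (1/2) = (real r + 1) powr (3/2)" .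
      moreover have "((real r + 1)^3) powr (1/2) = sqrt ((real r+1)^3)" by (simp add: powr_half_sqrt)
      ultimately show ?thesis by (simp add: add.commute)
    qed
    ultimately have h: "real (Suc r) powr (3/2) \<le> p r" by simp
    have "1 / p r \<le> 1 / real (Suc r) powr (3/2)"
      using h ppos[of r] by (intro divide_left_mono) auto
    then show ?thesis by (simp add: powr_minus_divide)
  qed
  have sum_p: "summable (\<lambda>r. 1 / p r)"
    by (rule summable_comparison_test'[OF summable_powr_shift, of 0]) (use pinv ppos in \<open>auto simp: abs_of_pos\<close>)
  have hb: "beta l k (int (n0 + (r + 1) * (k - l))) = p r" for r
  proof -
    have e: "int (n0 + (r + 1) * (k - l)) - int k + 1 = int (a0 + r * D)"
    proof -
      obtain t where t: "k = l + t" using assms(1) less_imp_add_positive by blast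
      obtain u where u: "n0 = l + u" using assms(3) le_Suc_ex by blast
      show ?thesis unfolding a0_def D_def t u by (simp add: algebra_simps)
    qed
    have rz: "rising (int m) s = pochhammer (real m) s" for m s by (simp add: rising_def)
    show ?thesis unfolding beta_def e rz p_def PP_def mm_def by simp
  qed
  have hb2: "beta l k (int (n0 + (r + 2) * (k - l))) = p (Suc r)" for r
  proof -
    have "r + 2 = Suc r + 1" by simp
    then show ?thesis using hb[of "Suc r"] by (simp only:)
  qed
  define \<delta> where "\<delta> r = f (n0 + r * D)" for r
  define g where "g r = f (n0 + (r + 1) * (k - l)) / p (Suc r)" for r
  have gdef2: "(\<lambda>r. complex_of_real (f (n0 + (r + 1) * (k - l)) / beta l k (int (n0 + (r + 2) * (k - l)))))
      = (\<lambda>r. complex_of_real (g r))"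
    by (rule ext) (simp only: hb2 g_def)
  have asymp': "has_asymp_expansion (\<lambda>r. complex_of_real (g r)) lam" using asymp unfolding gdef2 .
  have glim: "g \<longlonglongrightarrow> \<kappa>" by (rule asymp_lim[OF asymp' lam0])
  have gbv: "summable (\<lambda>r. \<bar>g (Suc r) - g r\<bar>)" by (rule asymp_bv[OF asymp'])
  have fd: "f (n0 + (r + 1) * (k - l)) = \<delta> (Suc r)" for r by (simp add: \<delta>_def D_def)
  have \<delta>nn: "\<delta> r \<ge> 0" for r using f_nonneg by (simp add: \<delta>_def)
  have gnn: "g r \<ge> 0" for r using f_nonneg[of "n0 + (r + 1) * (k - l)"] ppos[of "Suc r"] by (simp add: g_def)
  have \<kappa>nn: "\<kappa> \<ge> 0" using LIMSEQ_le_const[OF glim, of 0] gnn by auto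
  have \<delta>g: "\<delta> (Suc s) = p (Suc s) * g s" for s unfolding g_def fd using ppos[of "Suc s"] by simp
  have recp: "complex_of_real (p (Suc r)) * d (Suc (Suc r)) = complex_of_real (p r) * d r
      + (1 + \<i> * complex_of_real (\<delta> (Suc r))) * d (Suc r)" for r
  proof -
    have R: "d (r + 2) - (1 + \<i> * complex_of_real (\<delta> (Suc r))) / complex_of_real (p (Suc r)) * d (r + 1)
        - complex_of_real (p r) / complex_of_real (p (Suc r)) * d r = 0"
      using rec[of r] unfolding hb hb2 fd .
    have nz: "complex_of_real (p (Suc r)) \<noteq> 0" using ppos[of "Suc r"] by simp
    have e2: "r + 2 = Suc (Suc r)" "r + 1 = Suc r" by simp_all
    from R nz show ?thesis unfolding e2 by (simp add: field_simps)
  qed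
  define X where "X s = (cmod (d (Suc s)))^2" for s
  define Y where "Y s = (cmod (d (Suc (Suc s))))^2" for s
  define Jm where "Jm s = Im (d (Suc (Suc s)) * cnj (d (Suc s)))" for s
  define Rm where "Rm s = Re (d (Suc (Suc s)) * cnj (d (Suc s)))" for s
  define Q where "Q s = (p (Suc s)^2 / p (Suc (Suc s))) * X s + p (Suc s) * Y s - \<delta> (Suc s) * Jm s" for s
  have Xnn: "X s \<ge> 0" for s by (simp add: X_def)
  have Ynn: "Y s \<ge> 0" for s by (simp add: Y_def)
  have Jb: "\<bar>Jm s\<bar> \<le> (X s + Y s)/2" for s
    unfolding Jm_def X_def Y_def by (rule im_bound)
  have Rb: "\<bar>Rm s\<bar> \<le> (X s + Y s)/2" for s
    unfolding Rm_def X_def Y_def by (rule re_bound)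
  have ident: "Q (Suc s) - Q s = (p (Suc (Suc s))^2 / p (Suc (Suc (Suc s))) - p (Suc s) + 1 / p (Suc (Suc s))) * Y s
     + (2 * p (Suc s) / p (Suc (Suc s))) * Rm s
     + (\<delta> (Suc s) - \<delta> (Suc (Suc s)) * p (Suc s) / p (Suc (Suc s))) * Jm s" for s
    using energy_identity[where PA = "p (Suc s)" and PB = "p (Suc (Suc s))" and PC = "p (Suc (Suc (Suc s)))"
       and da = "\<delta> (Suc s)" and db = "\<delta> (Suc (Suc s))" and u = "d (Suc s)" and v = "d (Suc (Suc s))"
       and w = "d (Suc (Suc (Suc s)))", OF ppos ppos recp[of "Suc s"]]
    unfolding Q_def X_def Y_def Jm_def Rm_def by simp
  have Kpos: "K \<ge> 0" by (simp add: K_def)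
  have r2: "p (Suc (Suc s))^2 \<le> (1 + K / (real s + 1)^2) * (p (Suc s) * p (Suc (Suc (Suc s))))" for s
  proof -
    define c where "c = 1 + 1/(real (Suc s))^2"
    have c1: "c \<ge> 1" by (simp add: c_def)
    have h: "(PP a0 D k l (Suc (Suc s)))^2 \<le> c^(k+l) * (PP a0 D k l (Suc s) * PP a0 D k l (Suc (Suc (Suc s))))"
      using PP_ratio2[OF a0(1), where r = "Suc s" and D = D and k = k and l = l] unfolding c_def by simp
    have "p (Suc (Suc s))^2 = sqrt ((PP a0 D k l (Suc (Suc s)))^2)" using PPge[of "Suc (Suc s)"] psq by simp
    also have "\<dots> \<le> sqrt (c^(k+l) * (PP a0 D k l (Suc s) * PP a0 D k l (Suc (Suc (Suc s)))))"
      using h by (rule real_sqrt_le_mono)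
    also have "\<dots> = sqrt (c^(k+l)) * (p (Suc s) * p (Suc (Suc (Suc s))))"
      by (simp add: real_sqrt_mult p_def)
    also have "\<dots> \<le> c^(k+l) * (p (Suc s) * p (Suc (Suc (Suc s))))"
      using c1 ppos by (intro mult_right_mono sqrt_le_self') (auto intro!: one_le_power less_imp_le)
    also have "\<dots> \<le> (1 + K / (real s + 1)^2) * (p (Suc s) * p (Suc (Suc (Suc s))))"
    proof (intro mult_right_mono)
      have "c^(k+l) \<le> 1 + (1/(real (Suc s))^2) * real (k+l) * 2^(k+l)"
        unfolding c_def by (rule pow_bound) (auto simp: field_simps)
      then show "c^(k+l) \<le> 1 + K / (real s + 1)^2" by (simp add: K_def NN_def add.commute)
    qed (use ppos in \<open>auto intro: less_imp_le\<close>)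
    finally show ?thesis .
  qed
  have r1: "p (Suc (Suc s)) \<le> (1 + K / (real s + 1)) * p (Suc s)" for s
  proof -
    define c where "c = 1 + 1/(real (Suc s))"
    have c1: "c \<ge> 1" by (simp add: c_def)
    have h: "PP a0 D k l (Suc (Suc s)) \<le> c^(k+l) * PP a0 D k l (Suc s)"
      using PP_ratio1[OF a0(1), where r = "Suc s" and D = D and k = k and l = l] unfolding c_def by simp
    have "p (Suc (Suc s)) \<le> sqrt (c^(k+l) * PP a0 D k l (Suc s))"
      unfolding p_def using h by (rule real_sqrt_le_mono)
    also have "\<dots> = sqrt (c^(k+l)) * p (Suc s)"
      by (simp add: real_sqrt_mult p_def)
    also have "\<dots> \<le> c^(k+l) * p (Suc s)"
      using c1 ppos by (intro mult_right_mono sqrt_le_self') (auto intro!: one_le_power less_imp_le)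
    also have "\<dots> \<le> (1 + K / (real s + 1)) * p (Suc s)"
    proof (intro mult_right_mono)
      have "c^(k+l) \<le> 1 + (1/(real (Suc s))) * real (k+l) * 2^(k+l)"
        unfolding c_def by (rule pow_bound) (auto simp: field_simps)
      then show "c^(k+l) \<le> 1 + K / (real s + 1)" by (simp add: K_def NN_def add.commute)
    qed (use ppos in \<open>auto intro: less_imp_le\<close>)
    finally show ?thesis .
  qed
  define \<epsilon>0 where "\<epsilon>0 = (2 - \<kappa>) / 4"
  define \<eta> where "\<eta> = \<epsilon>0 / 2"
  have e0: "\<epsilon>0 > 0" "\<epsilon>0 \<le> 1/2" using assms(9) \<kappa>nn by (auto simp: \<epsilon>0_def)
  have eta: "\<eta> > 0" using e0 by (simp add: \<eta>_def)
  obtain R1 where R1: "\<And>s. s \<ge> R1 \<Longrightarrow> g s \<le> \<kappa> + \<epsilon>0"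
  proof -
    have "eventually (\<lambda>s. g s < \<kappa> + \<epsilon>0) sequentially"
      using order_tendstoD(2)[OF glim, of "\<kappa> + \<epsilon>0"] e0 by simp
    then obtain N where "\<And>s. s \<ge> N \<Longrightarrow> g s < \<kappa> + \<epsilon>0" unfolding eventually_sequentially by blast
    then show ?thesis using that less_imp_le by blast
  qed
  obtain R2 :: nat where R2: "K / \<epsilon>0 < real R2" using reals_Archimedean2 by blast
  define R0 where "R0 = max R1 R2"
  have lower: "\<eta> * p (Suc s) * (X s + Y s) \<le> Q s" if s: "s \<ge> R0" for s
  proof -
    define P0 where "P0 = p (Suc s)"
    define P1 where "P1 = p (Suc (Suc s))"
    define x where "x = K / (real s + 1)"
    have P0: "P0 \<ge> 1" "P1 > 0" using p1 ppos by (auto simp: P0_def P1_def)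
    have x0: "x \<ge> 0" using Kpos by (simp add: x_def)
    have "K < \<epsilon>0 * real R2" using R2 e0 by (simp add: field_simps)
    also have "\<dots> \<le> \<epsilon>0 * (real s + 1)" using s e0 by (intro mult_left_mono) (auto simp: R0_def)
    finally have xe: "x \<le> \<epsilon>0" unfolding x_def by (simp add: field_simps)
    have "(1 - \<epsilon>0) * P1 \<le> (1 - \<epsilon>0) * ((1 + x) * P0)"
      using r1[of s] e0 by (intro mult_left_mono) (auto simp: P0_def P1_def x_def)
    also have "\<dots> \<le> (1 - x) * ((1 + x) * P0)"
      using xe x0 P0 by (intro mult_right_mono) auto
    also have "\<dots> = P0 - x^2 * P0" by (simp add: algebra_simps power2_eq_square)
    also have "\<dots> \<le> P0" using P0 by simp
    finally have "(1 - \<epsilon>0) * P1 \<le> P0" .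
    then have ratio: "1 - \<epsilon>0 \<le> P0 / P1" using P0 by (simp add: pos_le_divide_eq)
    have h1: "P0 * (1 - \<epsilon>0) * X s \<le> (P0^2 / P1) * X s"
    proof -
      have "P0 * (1 - \<epsilon>0) \<le> P0 * (P0 / P1)" using ratio P0 by (intro mult_left_mono) auto
      also have "\<dots> = P0^2 / P1" by (simp add: power2_eq_square)
      finally show ?thesis using Xnn by (intro mult_right_mono) auto
    qed
    have h2: "\<delta> (Suc s) * Jm s \<le> P0 * (\<kappa> + \<epsilon>0) * ((X s + Y s) / 2)"
    proof -
      have "\<delta> (Suc s) * Jm s \<le> \<delta> (Suc s) * ((X s + Y s) / 2)"
        using Jb[of s] \<delta>nn[of "Suc s"] by (intro mult_left_mono) auto
      also have "\<dots> \<le> P0 * (\<kappa> + \<epsilon>0) * ((X s + Y s) / 2)"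
      proof (intro mult_right_mono)
        show "\<delta> (Suc s) \<le> P0 * (\<kappa> + \<epsilon>0)"
          unfolding \<delta>g P0_def using R1[of s] s ppos[of "Suc s"] by (intro mult_left_mono) (auto simp: R0_def)
      qed (use Xnn Ynn in auto)
      finally show ?thesis .
    qed
    have eq: "P0 * (1 - \<epsilon>0) * X s + P0 * Y s - P0 * (\<kappa> + \<epsilon>0) * ((X s + Y s) / 2) - \<eta> * P0 * (X s + Y s)
        = P0 * ((2 - \<kappa>) / 4 * Y s)"
      by (simp add: \<eta>_def \<epsilon>0_def field_simps)
    have "0 \<le> P0 * ((2 - \<kappa>) / 4 * Y s)" using P0 assms(9) Ynn by simp
    then show ?thesis using h1 h2 eq unfolding Q_def P0_def[symmetric] P1_def[symmetric] by linarith
  qed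
  define \<epsilon> where "\<epsilon> s = K / (real s + 1)^2 + 2 / p (Suc (Suc s)) + \<bar>g (Suc s) - g s\<bar> / 2" for s
  have \<epsilon>nn: "\<epsilon> s \<ge> 0" for s using Kpos ppos[of "Suc (Suc s)"] by (simp add: \<epsilon>_def)
  have upper: "Q (Suc s) - Q s \<le> p (Suc s) * (X s + Y s) * \<epsilon> s" for s
  proof -
    define P0 where "P0 = p (Suc s)"
    define P1 where "P1 = p (Suc (Suc s))"
    define P2 where "P2 = p (Suc (Suc (Suc s)))"
    define t where "t = K / (real s + 1)^2"
    have P: "P0 \<ge> 1" "P1 > 0" "P2 > 0" using p1 ppos by (auto simp: P0_def P1_def P2_def)
    have t0: "t \<ge> 0" using Kpos by (simp add: t_def)
    have a: "P1^2 / P2 - P0 \<le> t * P0"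
    proof -
      have "P1^2 \<le> (1 + t) * P0 * P2" using r2[of s] by (simp add: P0_def P1_def P2_def t_def mult.assoc)
      then have "P1^2 / P2 \<le> (1 + t) * P0" using P by (simp add: pos_divide_le_eq)
      then show ?thesis by (simp add: algebra_simps)
    qed
    have b: "1 / P1 \<le> P0 / P1" using P by (intro divide_right_mono) auto
    have t1: "(P1^2 / P2 - P0 + 1 / P1) * Y s \<le> (t * P0 + P0 / P1) * (X s + Y s)"
    proof -
      have "(P1^2 / P2 - P0 + 1 / P1) * Y s \<le> (t * P0 + P0 / P1) * Y s"
        using a b Ynn by (intro mult_right_mono) auto
      also have "\<dots> \<le> (t * P0 + P0 / P1) * (X s + Y s)"
        using t0 P Xnn by (intro mult_left_mono) auto
      finally show ?thesis .
    qed
    have t2: "(2 * P0 / P1) * Rm s \<le> (P0 / P1) * (X s + Y s)"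
    proof -
      have "(2 * P0 / P1) * Rm s \<le> (2 * P0 / P1) * ((X s + Y s) / 2)"
        using Rb[of s] P by (intro mult_left_mono) auto
      then show ?thesis by simp
    qed
    have t3: "(\<delta> (Suc s) - \<delta> (Suc (Suc s)) * P0 / P1) * Jm s \<le> P0 * \<bar>g (Suc s) - g s\<bar> * ((X s + Y s) / 2)"
    proof -
      have "\<delta> (Suc s) - \<delta> (Suc (Suc s)) * P0 / P1 = P0 * (g s - g (Suc s))"
        using P unfolding \<delta>g P0_def P1_def by (simp add: field_simps)
      then have "(\<delta> (Suc s) - \<delta> (Suc (Suc s)) * P0 / P1) * Jm s \<le> \<bar>P0 * (g s - g (Suc s))\<bar> * \<bar>Jm s\<bar>"
        by (metis abs_ge_self abs_mult)
      also have "\<dots> \<le> \<bar>P0 * (g s - g (Suc s))\<bar> * ((X s + Y s) / 2)"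
        by (rule mult_left_mono[OF Jb[of s]]) simp
      also have "\<bar>P0 * (g s - g (Suc s))\<bar> = P0 * \<bar>g (Suc s) - g s\<bar>" using P by (simp add: abs_mult abs_minus_commute)
      finally show ?thesis .
    qed
    have eq: "P0 * (X s + Y s) * \<epsilon> s = (t * P0 + P0 / P1) * (X s + Y s) + (P0 / P1) * (X s + Y s)
        + P0 * \<bar>g (Suc s) - g s\<bar> * ((X s + Y s) / 2)"
      using P unfolding \<epsilon>_def t_def P1_def[symmetric] by (simp add: field_simps)
    show ?thesis using ident[of s] t1 t2 t3 eq unfolding P0_def P1_def P2_def by linarith
  qed
  have step: "Q (Suc s) \<le> (1 + \<epsilon> s / \<eta>) * Q s" if s: "s \<ge> R0" for s
  proof -
    have "p (Suc s) * (X s + Y s) \<le> Q s / \<eta>" using lower[OF s] eta by (simp add: field_simps)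
    then have "p (Suc s) * (X s + Y s) * \<epsilon> s \<le> Q s / \<eta> * \<epsilon> s" using \<epsilon>nn by (intro mult_right_mono) auto
    then show ?thesis using upper[of s] by (simp add: algebra_simps)
  qed
  have Qnn: "Q s \<ge> 0" if "s \<ge> R0" for s
    using lower[OF that] eta ppos[of "Suc s"] Xnn[of s] Ynn[of s] by (smt (verit) mult_nonneg_nonneg)
  have sum\<epsilon>: "summable (\<lambda>s. \<epsilon> s / \<eta>)"
  proof -
    have "summable (\<lambda>n. inverse ((real n)^2))" using inverse_power_summable[of 2, where 'a=real] by simp
    then have "summable (\<lambda>n. inverse ((real (Suc n))^2))" by (subst summable_Suc_iff)
    then have s1: "summable (\<lambda>s. K / (real s + 1)^2)"
      using summable_mult[of "\<lambda>n. inverse ((real (Suc n))^2)" K] by (simp add: divide_inverse add.commute)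
    have "summable (\<lambda>s. 1 / p (Suc s))" using sum_p by (subst summable_Suc_iff)
    then have "summable (\<lambda>s. 1 / p (Suc (Suc s)))" by (subst summable_Suc_iff)
    from summable_mult[OF this, of 2] have s2: "summable (\<lambda>s. 2 / p (Suc (Suc s)))" by simp
    have s3: "summable (\<lambda>s. \<bar>g (Suc s) - g s\<bar> / 2)" using gbv by (rule summable_divide)
    have "summable \<epsilon>" unfolding \<epsilon>_def by (intro summable_add s1 s2 s3)
    then show ?thesis by (rule summable_divide)
  qed
  obtain M where M: "\<forall>s\<ge>R0. Q s \<le> M"
    using bounded_growth[of R0 Q "\<lambda>s. \<epsilon> s / \<eta>"] step Qnn \<epsilon>nn eta sum\<epsilon> by auto
  have Yb: "norm (Y s) \<le> (M / \<eta>) * (1 / p (Suc s))" if s: "s \<ge> R0" for s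
  proof -
    have "\<eta> * p (Suc s) * Y s \<le> \<eta> * p (Suc s) * (X s + Y s)"
      using eta ppos[of "Suc s"] Xnn[of s] by (intro mult_left_mono) auto
    also have "\<dots> \<le> M" using lower[OF s] M s by auto
    finally have "\<eta> * p (Suc s) * Y s \<le> M" .
    then show ?thesis using eta ppos[of "Suc s"] Ynn[of s] by (simp add: field_simps)
  qed
  have "summable (\<lambda>s. 1 / p (Suc s))" using sum_p by (subst summable_Suc_iff)
  then have "summable (\<lambda>s. (M / \<eta>) * (1 / p (Suc s)))" by (rule summable_mult)
  then have "summable Y" using Yb by (rule summable_comparison_test')
  moreover have "Y = (\<lambda>s. (cmod (d (Suc (Suc s))))^2)" by (rule ext) (simp add: Y_def)
  ultimately have "summable (\<lambda>s. (cmod (d (Suc (Suc s))))^2)" by simp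
  then have "summable (\<lambda>s. (cmod (d (Suc s)))^2)"
    using summable_Suc_iff[of "\<lambda>s. (cmod (d (Suc s)))^2"] by simp
  then show ?thesis using summable_Suc_iff[of "\<lambda>s. (cmod (d s))^2"] by simp
qed

end
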